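(* If $K\subseteq\mathbb{R}^d$ is a compact set with infinitely many connected components, then $(C^1(K),\|\cdot\|_{C^1(K)})$ is not complete.
   Context: $C^1(K)$ is the set of $f:K\to\mathbb{R}$ admitting a continuous derivative on $K$, i.e. a continuous $df:K\to\mathbb{R}^d$ with $\lim_{y\to x,\,y\in K\setminus\{x\}}\frac{f(y)-f(x)-\langle df(x),y-x\rangle}{|y-x|}=0$ for all $x\in K$. Its norm is $\|f\|_{C^1(K)}=\|f\|_K+\inf\{\|df\|_K: df \text{ a continuous derivative of } f \text{ on } K\}$, where $\|\cdot\|_K$ is the sup norm on $K$. *)

theory Defs
  imports "HOL-Analysis.Analysis"
begin

(* df is a continuous derivative of f on K (Whitney-style, relative to K).
   Note: "at x within K" already excludes the point x itself. *)
definition is_C1_deriv_on :: "'a::euclidean_space set \<Rightarrow> ('a \<Rightarrow> real) \<Rightarrow> ('a \<Rightarrow> 'a) \<Rightarrow> bool" where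
  "is_C1_deriv_on K f df \<longleftrightarrow>
     continuous_on K df \<and>
     (\<forall>x\<in>K. ((\<lambda>y. (f y - f x - inner (df x) (y - x)) / norm (y - x)) \<longlongrightarrow> 0) (at x within K))"

definition C1 :: "'a::euclidean_space set \<Rightarrow> ('a \<Rightarrow> real) set" where
  "C1 K = {f. \<exists>df. is_C1_deriv_on K f df}"

definition sup_norm_on :: "'a set \<Rightarrow> ('a \<Rightarrow> 'b::real_normed_vector) \<Rightarrow> real" where
  "sup_norm_on K g = (SUP x\<in>K. norm (g x))"

definition C1_norm :: "'a::euclidean_space set \<Rightarrow> ('a \<Rightarrow> real) \<Rightarrow> real" where
  "C1_norm K f = sup_norm_on K f + Inf {sup_norm_on K df | df. is_C1_deriv_on K f df}"

definition C1_complete :: "'a::euclidean_space set \<Rightarrow> bool" where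
  "C1_complete K \<longleftrightarrow>
     (\<forall>f :: nat \<Rightarrow> 'a \<Rightarrow> real.
        (\<forall>n. f n \<in> C1 K) \<and>
        (\<forall>e>0. \<exists>N. \<forall>m\<ge>N. \<forall>n\<ge>N. C1_norm K (\<lambda>x. f m x - f n x) < e)
        \<longrightarrow> (\<exists>g\<in>C1 K. (\<lambda>n. C1_norm K (\<lambda>x. f n x - g x)) \<longlonglongrightarrow> 0))"

end

theory Submission
  imports Defs
begin

definition clop :: "'a::euclidean_space set \<Rightarrow> 'a set \<Rightarrow> bool" where
  "clop K V \<longleftrightarrow> openin (top_of_set K) V \<and> closedin (top_of_set K) V"

lemma comp_clop_cases:
  assumes "c \<in> components K" "clop K T"
  shows "c \<subseteq> T \<or> c \<inter> T = {}"
proof -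
  have "connectedin (top_of_set K) c"
    using assms(1) by (simp add: connectedin_subtopology in_components_connected in_components_subset)
  then have "c \<subseteq> T \<or> disjnt c T" using connectedin_clopen_cases assms(2) unfolding clop_def
    by blast
  then show ?thesis by (simp add: disjnt_def)
qed

lemma sep_points:
  fixes K :: "'a::euclidean_space set"
  assumes "compact K" "x \<in> K" "y \<in> K" "\<not> connected_component K x y"
  shows "\<exists>T. clop K T \<and> x \<in> T \<and> y \<notin> T"
proof -
  have cs: "compact_space (top_of_set K)" using assms(1)
    by (simp add: compact_space_subtopology)
  have hs: "Hausdorff_space (top_of_set K)"
    by (simp add: Hausdorff_space_subtopology)
  have "\<not> connected_component_of (top_of_set K) x y"
    using assms(4) unfolding connected_component_of_def connected_component_def
    by (auto simp: connectedin_subtopology)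
  moreover have eq: "quasi_component_of (top_of_set K) x = connected_component_of (top_of_set K) x"
    by (rule quasi_eq_connected_component_of) (use cs hs in blast)
  ultimately have "\<not> quasi_component_of (top_of_set K) x y" by simp
  then have "\<not> (\<forall>T. closedin (top_of_set K) T \<and> openin (top_of_set K) T \<longrightarrow> (x \<in> T \<longleftrightarrow> y \<in> T))"
    using assms(2,3) by (simp add: quasi_component_of_def)
  then obtain T where T: "closedin (top_of_set K) T" "openin (top_of_set K) T" "\<not>(x \<in> T \<longleftrightarrow> y \<in> T)"
    by blast
  show ?thesis
  proof (cases "x \<in> T")
    case True
    then have "clop K T \<and> x \<in> T \<and> y \<notin> T" using T unfolding clop_def by blast
    then show ?thesis by blast
  next
    case False
    have "clop K (K - T)" using T unfolding clop_def
      by (metis closedin_diff closedin_topspace openin_diff openin_topspace topspace_euclidean_subtopology)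
    moreover have "x \<in> K - T" "y \<notin> K - T" using False T(3) assms(2) by auto
    ultimately show ?thesis by blast
  qed
qed

lemma comp_eq:
  assumes "c \<in> components K" "x \<in> c"
  shows "c = connected_component_set K x"
proof -
  obtain z where z: "z \<in> K" "c = connected_component_set K z" using assms(1) components_iff by blast
  then have "connected_component_set K x = connected_component_set K z"
    using assms(2) connected_component_eq by blast
  then show ?thesis using z by simp
qed

lemma split_step:
  fixes K :: "'a::euclidean_space set"
  assumes "compact K" "clop K V" "infinite {c\<in>components K. c \<subseteq> V}"
  shows "\<exists>A B. clop K A \<and> clop K B \<and> A \<union> B = V \<and> A \<inter> B = {} \<and> A \<noteq> {} \<and>
            infinite {c\<in>components K. c \<subseteq> B}"
proof -
  define S where "S = {c\<in>components K. c \<subseteq> V}"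
  have infS: "infinite S" using assms(3) S_def by simp
  obtain c1 where c1: "c1 \<in> S" using infS by (metis ex_in_conv infinite_imp_nonempty)
  have "infinite (S - {c1})" using infS by simp
  then obtain c2 where c2: "c2 \<in> S - {c1}" by (metis ex_in_conv infinite_imp_nonempty)
  have c1c: "c1 \<in> components K" "c1 \<subseteq> V" using c1 S_def by auto
  have c2c: "c2 \<in> components K" "c2 \<subseteq> V" "c2 \<noteq> c1" using c2 S_def by auto
  obtain x where x: "x \<in> c1" using c1c in_components_nonempty by blast
  obtain y where y: "y \<in> c2" using c2c in_components_nonempty by blast
  have xK: "x \<in> K" "y \<in> K" using x y c1c c2c in_components_subset by blast+
  have e1: "c1 = connected_component_set K x" by (rule comp_eq[OF c1c(1) x])
  have e2: "c2 = connected_component_set K y" by (rule comp_eq[OF c2c(1) y])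
  have "\<not> connected_component K x y"
  proof
    assume "connected_component K x y"
    then have "connected_component_set K x = connected_component_set K y"
      using connected_component_eq by blast
    then show False using e1 e2 c2c(3) by simp
  qed
  then obtain T where T: "clop K T" "x \<in> T" "y \<notin> T" using sep_points assms(1) xK by blast
  have cA: "clop K (V \<inter> T)" using assms(2) T(1) unfolding clop_def by auto
  have cB: "clop K (V - T)" using assms(2) T(1) unfolding clop_def
    by (metis closedin_diff openin_diff)
  define SA where "SA = {c\<in>components K. c \<subseteq> V \<inter> T}"
  define SB where "SB = {c\<in>components K. c \<subseteq> V - T}"
  have "S \<subseteq> SA \<union> SB"
  proof
    fix c assume "c \<in> S"
    then have c: "c \<in> components K" "c \<subseteq> V" unfolding S_def by auto
    from comp_clop_cases[OF c(1) T(1)] show "c \<in> SA \<union> SB"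
    proof
      assume "c \<subseteq> T" then show ?thesis using c unfolding SA_def by blast
    next
      assume "c \<inter> T = {}" then show ?thesis using c unfolding SB_def by blast
    qed
  qed
  then have "infinite SA \<or> infinite SB"
    using infS by (meson finite_UnI finite_subset)
  then show ?thesis
  proof
    assume inf: "infinite SA"
    have "y \<in> V - T" using y c2c T by auto
    then have "V - T \<noteq> {}" by blast
    moreover have "(V - T) \<union> (V \<inter> T) = V" "(V - T) \<inter> (V \<inter> T) = {}" by blast+
    ultimately show ?thesis using cA cB inf unfolding SA_def by blast
  next
    assume inf: "infinite SB"
    have "x \<in> V \<inter> T" using x c1c T by auto
    then have "V \<inter> T \<noteq> {}" by blast
    moreover have "(V \<inter> T) \<union> (V - T) = V" "(V \<inter> T) \<inter> (V - T) = {}" by blast+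
    ultimately show ?thesis using cA cB inf unfolding SB_def by blast
  qed
qed



lemma clop_seq:
  fixes K :: "'a::euclidean_space set"
  assumes "compact K" "infinite (components K)"
  shows "\<exists>U::nat \<Rightarrow> 'a set. (\<forall>n. clop K (U n) \<and> U n \<noteq> {}) \<and> (\<forall>m n. m \<noteq> n \<longrightarrow> U m \<inter> U n = {})"
proof -
  define P where "P V \<longleftrightarrow> clop K V \<and> infinite {c\<in>components K. c \<subseteq> V}" for V
  define Q where "Q V AB \<longleftrightarrow> clop K (fst AB) \<and> clop K (snd AB) \<and> fst AB \<union> snd AB = V \<and>
       fst AB \<inter> snd AB = {} \<and> fst AB \<noteq> {} \<and> infinite {c\<in>components K. c \<subseteq> snd AB}" for V AB
  define step where "step V = (SOME AB. Q V AB)" for V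
  have stepQ: "Q V (step V)" if pV: "P V" for V
  proof -
    obtain A B where "clop K A \<and> clop K B \<and> A \<union> B = V \<and> A \<inter> B = {} \<and> A \<noteq> {} \<and>
            infinite {c\<in>components K. c \<subseteq> B}"
      using split_step[OF assms(1)] pV unfolding P_def by blast
    then have "Q V (A,B)" unfolding Q_def by simp
    then show ?thesis unfolding step_def by (rule someI)
  qed
  define Vs where "Vs = rec_nat K (\<lambda>_ V. snd (step V))"
  have Vs0: "Vs 0 = K" and VsS: "Vs (Suc n) = snd (step (Vs n))" for n unfolding Vs_def by simp_all
  have PK: "P K"
  proof -
    have "clop K K" unfolding clop_def
      by (metis closedin_topspace openin_topspace topspace_euclidean_subtopology)
    moreover have "{c\<in>components K. c \<subseteq> K} = components K" using in_components_subset by blast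
    ultimately show ?thesis unfolding P_def using assms(2) by simp
  qed
  have PV: "P (Vs n)" for n
  proof (induction n)
    case 0 then show ?case using PK Vs0 by simp
  next
    case (Suc n)
    then show ?case using stepQ[OF Suc] VsS unfolding Q_def P_def by simp
  qed
  define U where "U n = fst (step (Vs n))" for n
  have QV: "Q (Vs n) (step (Vs n))" for n using stepQ PV by blast
  have Usub: "U n \<subseteq> Vs n" for n using QV[of n] unfolding Q_def U_def by auto
  have disj1: "U n \<inter> Vs (Suc n) = {}" for n using QV[of n] unfolding Q_def U_def VsS by auto
  have mono: "Vs m \<subseteq> Vs n" if "n \<le> m" for m n
    using that
  proof (induction m rule: dec_induct)
    case base then show ?case by simp
  next
    case (step m)
    then show ?case using QV[of m] VsS[of m] unfolding Q_def by auto
  qed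
  have "U m \<inter> U n = {}" if "n < m" for m n
  proof -
    have "U m \<subseteq> Vs (Suc n)" using Usub[of m] mono[of "Suc n" m] that by auto
    then show ?thesis using disj1[of n] by auto
  qed
  then have "\<forall>m n. m \<noteq> n \<longrightarrow> U m \<inter> U n = {}"
    by (metis inf_commute linorder_neqE_nat)
  moreover have "\<forall>n. clop K (U n) \<and> U n \<noteq> {}" using QV unfolding Q_def U_def by blast
  ultimately show ?thesis by blast
qed



lemma bdd_norm_cont:
  fixes g :: "'a::euclidean_space \<Rightarrow> 'b::real_normed_vector"
  assumes "compact K" "continuous_on K g"
  shows "bdd_above ((\<lambda>x. norm (g x)) ` K)"
proof -
  have "compact (g ` K)" using assms compact_continuous_image by blast
  then have "bounded (g ` K)" by (rule compact_imp_bounded)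
  then obtain B where "\<forall>y\<in>g ` K. norm y \<le> B" using bounded_iff by blast
  then show ?thesis by (auto intro!: bdd_aboveI[of _ B])
qed

lemma tendsto_sub_at:
  fixes x :: "'a::real_normed_vector"
  shows "((\<lambda>y. y - x) \<longlongrightarrow> 0) (at x within K)"
proof -
  have "((\<lambda>y. y - x) \<longlongrightarrow> x - x) (at x within K)"
    by (intro tendsto_diff tendsto_ident_at tendsto_const)
  then show ?thesis by simp
qed

lemma C1_cont:
  assumes "is_C1_deriv_on K f df"
  shows "continuous_on K f"
  unfolding continuous_on_def
proof
  fix x assume x: "x \<in> K"
  define q where "q y = (f y - f x - inner (df x) (y - x)) / norm (y - x)" for y
  have q: "(q \<longlongrightarrow> 0) (at x within K)" using assms x unfolding is_C1_deriv_on_def q_def by blast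
  have n: "((\<lambda>y. norm (y - x)) \<longlongrightarrow> 0) (at x within K)"
    using tendsto_norm_zero[OF tendsto_sub_at] .
  have i: "((\<lambda>y. inner (df x) (y - x)) \<longlongrightarrow> inner (df x) 0) (at x within K)"
    by (intro tendsto_inner tendsto_const tendsto_sub_at)
  have "((\<lambda>y. q y * norm (y - x) + inner (df x) (y - x) + f x) \<longlongrightarrow> 0 * 0 + inner (df x) 0 + f x) (at x within K)"
    by (intro tendsto_add tendsto_mult q n i tendsto_const)
  then have lim: "((\<lambda>y. q y * norm (y - x) + inner (df x) (y - x) + f x) \<longlongrightarrow> f x) (at x within K)"
    by simp
  have ev: "eventually (\<lambda>y. q y * norm (y - x) + inner (df x) (y - x) + f x = f y) (at x within K)"
    unfolding eventually_at_filter q_def by (auto intro!: always_eventually)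
  show "(f \<longlongrightarrow> f x) (at x within K)"
    using Lim_transform_eventually[OF lim ev] .
qed

lemma C1_diff:
  assumes "is_C1_deriv_on K f df" "is_C1_deriv_on K g dg"
  shows "is_C1_deriv_on K (\<lambda>x. f x - g x) (\<lambda>x. df x - dg x)"
  unfolding is_C1_deriv_on_def
proof (intro conjI ballI)
  show "continuous_on K (\<lambda>x. df x - dg x)"
    using assms unfolding is_C1_deriv_on_def by (intro continuous_on_diff) auto
  fix x assume x: "x \<in> K"
  have a: "((\<lambda>y. (f y - f x - inner (df x) (y - x)) / norm (y - x)) \<longlongrightarrow> 0) (at x within K)"
    using assms(1) x unfolding is_C1_deriv_on_def by blast
  have b: "((\<lambda>y. (g y - g x - inner (dg x) (y - x)) / norm (y - x)) \<longlongrightarrow> 0) (at x within K)"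
    using assms(2) x unfolding is_C1_deriv_on_def by blast
  have "((\<lambda>y. (f y - f x - inner (df x) (y - x)) / norm (y - x) - (g y - g x - inner (dg x) (y - x)) / norm (y - x)) \<longlongrightarrow> 0 - 0) (at x within K)"
    by (intro tendsto_diff a b)
  moreover have "(f y - f x - inner (df x) (y - x)) / norm (y - x) - (g y - g x - inner (dg x) (y - x)) / norm (y - x)
     = (f y - g y - (f x - g x) - inner (df x - dg x) (y - x)) / norm (y - x)" for y
    by (simp add: inner_diff_left diff_divide_distrib[symmetric] algebra_simps)
  ultimately show "((\<lambda>y. (f y - g y - (f x - g x) - inner (df x - dg x) (y - x)) / norm (y - x)) \<longlongrightarrow> 0) (at x within K)"
    by simp
qed

lemma locconst_C1:
  assumes "\<forall>x\<in>K. eventually (\<lambda>y. f y = f x) (at x within K)"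
  shows "is_C1_deriv_on K f (\<lambda>_. 0)"
  unfolding is_C1_deriv_on_def
proof (intro conjI ballI)
  show "continuous_on K (\<lambda>_. 0::'a)" by simp
  fix x assume x: "x \<in> K"
  have "eventually (\<lambda>y. 0 = (f y - f x - inner 0 (y - x)) / norm (y - x)) (at x within K)"
    using assms x by (auto elim!: eventually_mono)
  then show "((\<lambda>y. (f y - f x - inner 0 (y - x)) / norm (y - x)) \<longlongrightarrow> 0) (at x within K)"
    by (rule Lim_transform_eventually[OF tendsto_const])
qed

lemma C1_norm_ge:
  assumes K: "compact K" and h: "is_C1_deriv_on K h dh" and x: "x \<in> K"
  shows "\<bar>h x\<bar> \<le> C1_norm K h"
proof -
  have hc: "continuous_on K h" using C1_cont[OF h] .
  have s: "\<bar>h x\<bar> \<le> sup_norm_on K h"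
    unfolding sup_norm_on_def using cSUP_upper[OF x bdd_norm_cont[OF K hc]] by simp
  have "0 \<le> Inf {sup_norm_on K df | df. is_C1_deriv_on K h df}"
  proof (rule cInf_greatest)
    show "{sup_norm_on K df | df. is_C1_deriv_on K h df} \<noteq> {}" using h by blast
  next
    fix s assume "s \<in> {sup_norm_on K df | df. is_C1_deriv_on K h df}"
    then obtain df where s: "s = sup_norm_on K df" and df: "is_C1_deriv_on K h df" by blast
    have "continuous_on K df" using df unfolding is_C1_deriv_on_def by blast
    then have "norm (df x) \<le> sup_norm_on K df"
      unfolding sup_norm_on_def using cSUP_upper[OF x bdd_norm_cont[OF K]] by blast
    then show "0 \<le> s" using s norm_ge_zero order_trans by blast
  qed
  then show ?thesis using s unfolding C1_norm_def by linarith
qed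

lemma C1_norm_le_lc:
  assumes K: "compact K" "K \<noteq> {}" and lc: "\<forall>x\<in>K. eventually (\<lambda>y. f y = f x) (at x within K)"
    and B: "\<forall>x\<in>K. \<bar>f x\<bar> \<le> B"
  shows "C1_norm K f \<le> B"
proof -
  have s: "sup_norm_on K f \<le> B"
    unfolding sup_norm_on_def using B K(2) by (auto intro!: cSUP_least)
  have z: "sup_norm_on K (\<lambda>_. 0::'a) = 0"
    unfolding sup_norm_on_def using K(2) by simp
  have mem: "sup_norm_on K (\<lambda>_. 0::'a) \<in> {sup_norm_on K df | df. is_C1_deriv_on K f df}"
    using locconst_C1[OF lc] by blast
  have bdd: "bdd_below {sup_norm_on K df | df. is_C1_deriv_on K f df}"
  proof (rule bdd_belowI[of _ 0])
    fix s assume "s \<in> {sup_norm_on K df | df. is_C1_deriv_on K f df}"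
    then obtain df where s: "s = sup_norm_on K df" and df: "is_C1_deriv_on K f df" by blast
    obtain x where x: "x \<in> K" using K(2) by blast
    have "continuous_on K df" using df unfolding is_C1_deriv_on_def by blast
    then have "norm (df x) \<le> sup_norm_on K df"
      unfolding sup_norm_on_def using cSUP_upper[OF x bdd_norm_cont[OF K(1)]] by blast
    then show "0 \<le> s" using s norm_ge_zero order_trans by blast
  qed
  have "Inf {sup_norm_on K df | df. is_C1_deriv_on K f df} \<le> 0"
    using cInf_lower[OF mem bdd] z by simp
  then show ?thesis using s unfolding C1_norm_def by linarith
qed


lemma ev_openin:
  assumes "openin (top_of_set K) S" "z \<in> S"
  shows "eventually (\<lambda>w. w \<in> S) (at z within K)"
proof -
  obtain T where T: "open T" "S = K \<inter> T" using assms(1) openin_open by blast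
  have "eventually (\<lambda>w. w \<in> T) (at z within K)"
    using topological_tendstoD[OF tendsto_ident_at[of z K]] T assms(2) by blast
  moreover have "eventually (\<lambda>w. w \<in> K) (at z within K)" by (simp add: eventually_at_filter)
  ultimately show ?thesis by eventually_elim (auto simp: T(2))
qed

lemma ev_clop:
  assumes "clop K W" "z \<in> K"
  shows "eventually (\<lambda>w. indicator W w = (indicator W z :: real)) (at z within K)"
proof (cases "z \<in> W")
  case True
  have "eventually (\<lambda>w. w \<in> W) (at z within K)"
    using ev_openin True assms(1) unfolding clop_def by blast
  then show ?thesis by eventually_elim (simp add: indicator_def True)
next
  case False
  have "openin (top_of_set K) (K - W)" using assms(1) unfolding clop_def
    by (metis closedin_def topspace_euclidean_subtopology)
  then have "eventually (\<lambda>w. w \<in> K - W) (at z within K)"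
    using ev_openin False assms(2) by blast
  then show ?thesis by eventually_elim (simp add: indicator_def False)
qed

lemma geom_tail:
  assumes "n \<le> m"
  shows "(\<Sum>j\<in>{n..<m}. (1/2::real)^j) \<le> 2 * (1/2)^n"
proof -
  have "(\<Sum>j\<in>{n..<m}. (1/2::real)^j) \<le> 2 * (1/2)^n - 2 * (1/2)^m"
    using assms
  proof (induction m rule: dec_induct)
    case base then show ?case by simp
  next
    case (step m)
    then show ?case by simp
  qed
  moreover have "0 \<le> (1/2::real)^m" by simp
  ultimately show ?thesis by linarith
qed

theorem mainTheorem5:
  fixes K :: "'a::euclidean_space set"
  assumes "compact K" and "infinite (components K)"
  shows "\<not> C1_complete K"
proof
  assume comp: "C1_complete K"
  have Kne: "K \<noteq> {}" using assms(2) components_empty by force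
  obtain U :: "nat \<Rightarrow> 'a set" where U0: "(\<forall>n. clop K (U n) \<and> U n \<noteq> {}) \<and> (\<forall>m n. m \<noteq> n \<longrightarrow> U m \<inter> U n = {})"
    using clop_seq[OF assms] by blast
  have U: "\<And>n. clop K (U n)" "\<And>n. U n \<noteq> {}" using U0 by auto
  have Ud: "\<And>m n. m \<noteq> n \<Longrightarrow> U m \<inter> U n = {}" using U0 by auto
  have UK: "U n \<subseteq> K" for n using U(1) unfolding clop_def by (meson closedin_imp_subset)
  define x where "x n = (SOME z. z \<in> U n)" for n
  have xU: "x n \<in> U n" for n unfolding x_def using U(2) by (simp add: some_in_eq)
  have xK: "x n \<in> K" for n using xU UK by blast
  obtain l r where l: "l \<in> K" and r: "strict_mono r" and lim: "(x \<circ> r) \<longlonglongrightarrow> l"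
    by (rule seq_compactE[OF compact_imp_seq_compact[OF assms(1)], of x]) (use xK in blast)
  have lnot: "l \<notin> U i" for i
  proof
    assume li: "l \<in> U i"
    obtain T where T: "open T" "U i = K \<inter> T" using U(1)[of i] openin_open unfolding clop_def by blast
    have "eventually (\<lambda>n. (x \<circ> r) n \<in> T) sequentially"
      using topological_tendstoD[OF lim] T li by blast
    moreover have "eventually (\<lambda>n. n > i) sequentially" by (rule eventually_gt_at_top)
    ultimately have "eventually (\<lambda>n. (x \<circ> r) n \<in> T \<and> n > i) sequentially" by eventually_elim auto
    then obtain N where N: "\<forall>n\<ge>N. (x \<circ> r) n \<in> T \<and> n > i" unfolding eventually_sequentially by blast
    define n where "n = N"
    have n: "x (r n) \<in> T" "n > i" using N unfolding n_def by auto
    have "r n \<ge> n" using r seq_suble by blast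
    then have "r n \<noteq> i" using n by simp
    moreover have "x (r n) \<in> U i" using n xK T by auto
    ultimately show False using Ud[of "r n" i] xU[of "r n"] by blast
  qed
  have "\<forall>j. \<exists>m. dist (x (r m)) l < (1/4::real)^j"
  proof
    fix j :: nat
    have "(0::real) < (1/4)^j" by simp
    then obtain N where "\<forall>n\<ge>N. dist ((x \<circ> r) n) l < (1/4)^j" using lim unfolding lim_sequentially by blast
    then show "\<exists>m. dist (x (r m)) l < (1/4::real)^j" by auto
  qed
  then obtain m where m: "\<And>j. dist (x (r (m j))) l < (1/4::real)^j" by metis
  define W where "W j = U (r (m j))" for j
  define y where "y j = x (r (m j))" for j
  have yW: "y j \<in> W j" and cW: "clop K (W j)" and lW: "l \<notin> W j" and yK: "y j \<in> K" for j
    unfolding W_def y_def using xU U(1) lnot xK by auto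
  have yl: "y j \<noteq> l" for j using yW lW by blast
  have yd: "dist (y j) l < (1/4)^j" for j using m unfolding y_def .
  define f where "f n z = (\<Sum>j<n. (1/2::real)^j * indicator (W j) z)" for n z
  have lc: "\<forall>z\<in>K. eventually (\<lambda>w. f n w = f n z) (at z within K)" for n
  proof
    fix z assume z: "z \<in> K"
    have "eventually (\<lambda>w. \<forall>j\<in>{..<n}. indicator (W j) w = (indicator (W j) z :: real)) (at z within K)"
      using ev_clop[OF cW z] by (intro eventually_ball_finite) auto
    then show "eventually (\<lambda>w. f n w = f n z) (at z within K)"
      unfolding f_def by eventually_elim simp
  qed
  have lc2: "\<forall>z\<in>K. eventually (\<lambda>w. f p w - f q w = f p z - f q z) (at z within K)" for p q
  proof
    fix z assume z: "z \<in> K"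
    have "eventually (\<lambda>w. f p w = f p z) (at z within K)" "eventually (\<lambda>w. f q w = f q z) (at z within K)"
      using lc z by blast+
    then show "eventually (\<lambda>w. f p w - f q w = f p z - f q z) (at z within K)" by eventually_elim simp
  qed
  have fC1: "f n \<in> C1 K" for n using locconst_C1[OF lc[of n]] unfolding C1_def by blast
  have bnd1: "\<bar>f p z - f q z\<bar> \<le> 2 * (1/2)^q" if "q \<le> p" for p q z
  proof -
    have split: "f p z = f q z + (\<Sum>j\<in>{q..<p}. (1/2::real)^j * indicator (W j) z)"
      unfolding f_def using sum.atLeastLessThan_concat[of 0 q p "\<lambda>j. (1/2::real)^j * indicator (W j) z"] that
      by (simp add: atLeast0LessThan)
    have "0 \<le> (\<Sum>j\<in>{q..<p}. (1/2::real)^j * indicator (W j) z)"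
      by (intro sum_nonneg) simp
    moreover have "(\<Sum>j\<in>{q..<p}. (1/2::real)^j * indicator (W j) z) \<le> (\<Sum>j\<in>{q..<p}. (1/2::real)^j)"
      by (intro sum_mono) (simp add: indicator_def)
    ultimately show ?thesis using split geom_tail[OF that] by simp
  qed
  have bnd: "\<bar>f p z - f q z\<bar> \<le> 2 * (1/2)^N" if "p \<ge> N" "q \<ge> N" for p q z N
  proof (cases "q \<le> p")
    case True
    have "(1/2::real)^q \<le> (1/2)^N" using that by (intro power_decreasing) auto
    then show ?thesis using bnd1[OF True, of z] by linarith
  next
    case False
    have "(1/2::real)^p \<le> (1/2)^N" using that by (intro power_decreasing) auto
    moreover have "\<bar>f q z - f p z\<bar> \<le> 2 * (1/2)^p" using bnd1[of p q z] False by simp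
    moreover have "\<bar>f p z - f q z\<bar> = \<bar>f q z - f p z\<bar>" by (rule abs_minus_commute)
    ultimately show ?thesis by linarith
  qed
  have cauchy: "\<forall>e>0. \<exists>N. \<forall>p\<ge>N. \<forall>q\<ge>N. C1_norm K (\<lambda>z. f p z - f q z) < e"
  proof (intro allI impI)
    fix e :: real assume e: "e > 0"
    obtain N where N: "(1/2::real)^N < e/2" using real_arch_pow_inv[of "e/2" "1/2"] e by auto
    have "C1_norm K (\<lambda>z. f p z - f q z) < e" if "p \<ge> N" "q \<ge> N" for p q
    proof -
      have "C1_norm K (\<lambda>z. f p z - f q z) \<le> 2 * (1/2)^N"
        using C1_norm_le_lc[OF assms(1) Kne lc2[of p q]] bnd[OF that] by blast
      then show ?thesis using N by simp
    qed
    then show "\<exists>N. \<forall>p\<ge>N. \<forall>q\<ge>N. C1_norm K (\<lambda>z. f p z - f q z) < e" by blast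
  qed
  obtain g where g: "g \<in> C1 K" and glim: "(\<lambda>n. C1_norm K (\<lambda>z. f n z - g z)) \<longlonglongrightarrow> 0"
    using comp fC1 cauchy unfolding C1_complete_def by blast
  obtain dg where dg: "is_C1_deriv_on K g dg" using g unfolding C1_def by blast
  have fgd: "is_C1_deriv_on K (\<lambda>z. f n z - g z) (\<lambda>z. 0 - dg z)" for n
    using C1_diff[OF locconst_C1[OF lc[of n]] dg] .
  have conv: "(\<lambda>n. f n z) \<longlonglongrightarrow> g z" if z: "z \<in> K" for z
  proof -
    have "(\<lambda>n. f n z - g z) \<longlonglongrightarrow> 0"
      using C1_norm_ge[OF assms(1) fgd z] by (intro Lim_null_comparison[OF _ glim]) auto
    then show ?thesis by (simp add: LIM_zero_iff)
  qed
  have gl: "g l = 0"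
  proof -
    have "f n l = 0" for n unfolding f_def using lW by simp
    then have "(\<lambda>n. f n l) \<longlonglongrightarrow> 0" by simp
    then show ?thesis using conv[OF l] LIMSEQ_unique by blast
  qed
  have gy: "(1/2)^j \<le> g (y j)" for j
  proof (rule LIMSEQ_le_const[OF conv[OF yK]])
    show "\<exists>N. \<forall>n\<ge>N. (1/2)^j \<le> f n (y j)"
    proof (intro exI allI impI)
      fix n assume n: "n \<ge> Suc j"
      have "(1/2::real)^j * indicator (W j) (y j) \<le> f n (y j)"
        unfolding f_def using n by (intro member_le_sum) auto
      then show "(1/2)^j \<le> f n (y j)" using yW by simp
    qed
  qed
  have yd': "dist (y j) l \<le> (1/4)^j" for j using yd[of j] by linarith
  have ylim: "y \<longlonglongrightarrow> l"
  proof -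
    have "(\<lambda>j. dist (y j) l) \<longlonglongrightarrow> 0"
    proof (rule Lim_null_comparison)
      show "eventually (\<lambda>j. norm (dist (y j) l) \<le> (1/4::real)^j) sequentially"
        using yd' by (intro always_eventually allI) simp
      show "(\<lambda>j. (1/4::real)^j) \<longlonglongrightarrow> 0" by (rule LIMSEQ_power_zero) simp
    qed
    then show ?thesis by (rule tendsto_dist_iff[THEN iffD2])
  qed
  have "eventually (\<lambda>j. y j \<in> K \<and> y j \<noteq> l) sequentially"
    using yK yl by (intro always_eventually allI) blast
  then have yat: "filterlim y (at l within K) sequentially"
    unfolding filterlim_at using ylim by blast
  define Q where "Q w = (g w - g l - inner (dg l) (w - l)) / norm (w - l)" for w
  have "\<forall>x\<in>K. ((\<lambda>w. (g w - g x - inner (dg x) (w - x)) / norm (w - x)) \<longlongrightarrow> 0) (at x within K)"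
    using dg unfolding is_C1_deriv_on_def by (rule conjunct2)
  from bspec[OF this l] have Qlim: "(Q \<longlongrightarrow> 0) (at l within K)" unfolding Q_def .
  have Qy: "(\<lambda>j. Q (y j)) \<longlonglongrightarrow> 0" using filterlim_compose[OF Qlim yat] .
  have Qlow: "Q (y j) \<ge> 2^j - norm (dg l)" for j
  proof -
    define d where "d = norm (y j - l)"
    have dpos: "d > 0" using yl unfolding d_def by simp
    have dlt: "d < (1/4)^j" using yd unfolding d_def by (simp add: dist_norm)
    have cs: "inner (dg l) (y j - l) \<le> norm (dg l) * d" unfolding d_def by (rule norm_cauchy_schwarz)
    have "Q (y j) = (g (y j) - inner (dg l) (y j - l)) / d" unfolding Q_def d_def gl by simp
    also have "\<dots> \<ge> ((1/2)^j - norm (dg l) * d) / d"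
      using gy[of j] cs dpos by (intro divide_right_mono) auto
    finally have "Q (y j) \<ge> (1/2)^j / d - norm (dg l)" using dpos by (simp add: diff_divide_distrib)
    moreover have "(1/2::real)^j / d \<ge> (1/2)^j / (1/4)^j"
      using dpos dlt by (intro divide_left_mono) auto
    moreover have "(1/2::real)^j / (1/4)^j = 2^j"
    proof -
      have "(1/4::real)^j = (1/2)^j * (1/2)^j" by (simp add: power_mult_distrib[symmetric])
      then show ?thesis by (simp add: power_one_over)
    qed
    ultimately show ?thesis by linarith
  qed
  have "eventually (\<lambda>j. Q (y j) < 1) sequentially"
    using order_tendstoD(2)[OF Qy] by simp
  moreover have "eventually (\<lambda>j. real j \<ge> norm (dg l) + 1) sequentially"
  proof -
    obtain n0 where n0: "norm (dg l) + 1 \<le> real n0" using real_arch_simple by blast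
    show ?thesis using eventually_ge_at_top[of n0]
      by eventually_elim (use n0 in auto)
  qed
  ultimately have "eventually (\<lambda>j. False) sequentially"
  proof eventually_elim
    case (elim j)
    have "real j < 2^j" by (rule of_nat_less_two_power)
    then show False using elim Qlow[of j] by linarith
  qed
  then show False by simp
qed


end
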